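(* Let $|\psi\rangle=\sum_jc_j|\phi_j\rangle$ be a normalized $n$-qubit state where the $|\phi_j\rangle$ are stabilizer states, and let $k\ge1$ be an integer. Then one can sample from an ensemble $\rho_1$ such that every sampled pure state has stabilizer rank at most $k$ and $$\|\rho_1-|\psi\rangle\langle\psi|\|_1\le\frac{2\|c\|_1^2}{k}+\sqrt{\mathrm{Var}[\langle\Omega|\Omega\rangle]},$$ where $|\Omega\rangle$ is the random sparsified vector defined below.
   Context: Sparsification: let $|\omega_1\rangle,\dots,|\omega_k\rangle$ be i.i.d. random vectors with $|\omega_\alpha\rangle=(c_j/|c_j|)|\phi_j\rangle$ with probability $|c_j|/\|c\|_1$, and $|\Omega\rangle=\frac{\|c\|_1}{k}\sum_{\alpha=1}^k|\omega_\alpha\rangle$. The ensemble is $\rho_1=\mathbb E\big[|\Omega\rangle\langle\Omega|/\langle\Omega|\Omega\rangle\big]$, sampled by drawing $|\Omega\rangle$ and normalizing. The stabilizer rank of a vector is the minimal number of stabilizer states in a linear decomposition of it. *)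

theory Defs
  imports "Jordan_Normal_Form.Schur_Decomposition"
begin

text \<open>n-qubit vectors are complex vectors of dimension 2^n (computational basis
  indexed by 0..2^n-1, bit i of the index = value of qubit i).\<close>

definition qdim :: "nat \<Rightarrow> nat" where "qdim n = 2 ^ n"

text \<open>Pauli operator  i^m X^a Z^b  on n qubits, a b bit-strings encoded as naturals < 2^n:
  (X^a Z^b) |x> = (-1)^(b.x) |x xor a>.\<close>
definition pauli_op :: "nat \<Rightarrow> nat \<Rightarrow> nat \<Rightarrow> nat \<Rightarrow> complex mat" where
  "pauli_op n m a b = mat (qdim n) (qdim n)
     (\<lambda>(r, s). if r = xor s a
               then \<i> ^ m * (-1) ^ card {i. i < n \<and> bit b i \<and> bit s i} else 0)"

definition pauli_group :: "nat \<Rightarrow> complex mat set" where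
  "pauli_group n = {pauli_op n m a b | m a b. m < 4 \<and> a < qdim n \<and> b < qdim n}"

definition vnorm :: "complex vec \<Rightarrow> real" where
  "vnorm v = sqrt (\<Sum>i<dim_vec v. (cmod (v $ i))\<^sup>2)"

definition stabilizer_state :: "nat \<Rightarrow> complex vec \<Rightarrow> bool" where
  "stabilizer_state n v \<longleftrightarrow> v \<in> carrier_vec (qdim n) \<and> vnorm v = 1 \<and>
     (\<exists>S. S \<subseteq> pauli_group n \<and> card S = 2 ^ n \<and> (\<forall>P\<in>S. P *\<^sub>v v = v))"

definition stabilizer_rank :: "nat \<Rightarrow> complex vec \<Rightarrow> nat" where
  "stabilizer_rank n v = (LEAST r. \<exists>(a :: nat \<Rightarrow> complex) (\<phi> :: nat \<Rightarrow> complex vec).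
      (\<forall>j<r. stabilizer_state n (\<phi> j)) \<and>
      v = vec (qdim n) (\<lambda>i. \<Sum>j<r. a j * \<phi> j $ i))"

definition outer :: "complex vec \<Rightarrow> complex vec \<Rightarrow> complex mat" where
  "outer u v = mat (dim_vec u) (dim_vec v) (\<lambda>(r, s). u $ r * cnj (v $ s))"

text \<open>Schatten 1-norm: sum of singular values, i.e. of square roots of the eigenvalues
  (with algebraic multiplicity) of A^H A.\<close>
definition trace_norm :: "complex mat \<Rightarrow> real" where
  "trace_norm A = (let p = char_poly (mat_adjoint A * A) in
     \<Sum>z\<in>{z. poly p z = 0}. real (order z p) * sqrt (Re z))"

definition l1_norm :: "(nat \<Rightarrow> complex) \<Rightarrow> nat \<Rightarrow> real" where
  "l1_norm c m = (\<Sum>j<m. cmod (c j))"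

text \<open>Outcomes of the k i.i.d. draws (j_1,...,j_k), each j in {0..<m}.\<close>
definition samples :: "nat \<Rightarrow> nat \<Rightarrow> nat list set" where
  "samples m k = {js. length js = k \<and> set js \<subseteq> {..<m}}"

definition sample_prob :: "(nat \<Rightarrow> complex) \<Rightarrow> nat \<Rightarrow> nat list \<Rightarrow> real" where
  "sample_prob c m js = (\<Prod>\<alpha><length js. cmod (c (js ! \<alpha>)) / l1_norm c m)"

definition Omega :: "nat \<Rightarrow> (nat \<Rightarrow> complex) \<Rightarrow> (nat \<Rightarrow> complex vec) \<Rightarrow> nat \<Rightarrow> nat list
    \<Rightarrow> complex vec" where
  "Omega n c \<phi> m js = vec (qdim n) (\<lambda>i. complex_of_real (l1_norm c m / real (length js)) *
      (\<Sum>\<alpha><length js. (c (js ! \<alpha>) / complex_of_real (cmod (c (js ! \<alpha>)))) * \<phi> (js ! \<alpha>) $ i))"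

definition expect :: "(nat \<Rightarrow> complex) \<Rightarrow> nat \<Rightarrow> nat \<Rightarrow> (nat list \<Rightarrow> real) \<Rightarrow> real" where
  "expect c m k f = (\<Sum>js\<in>samples m k. sample_prob c m js * f js)"

definition var_norm2 :: "nat \<Rightarrow> (nat \<Rightarrow> complex) \<Rightarrow> (nat \<Rightarrow> complex vec) \<Rightarrow> nat \<Rightarrow> nat \<Rightarrow> real" where
  "var_norm2 n c \<phi> m k =
     expect c m k (\<lambda>js. ((vnorm (Omega n c \<phi> m js))\<^sup>2 - expect c m k (\<lambda>js'. (vnorm (Omega n c \<phi> m js'))\<^sup>2))\<^sup>2)"

definition sampled_state :: "nat \<Rightarrow> (nat \<Rightarrow> complex) \<Rightarrow> (nat \<Rightarrow> complex vec) \<Rightarrow> nat \<Rightarrow> nat list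
    \<Rightarrow> complex vec" where
  "sampled_state n c \<phi> m js = complex_of_real (1 / vnorm (Omega n c \<phi> m js)) \<cdot>\<^sub>v Omega n c \<phi> m js"

definition rho1 :: "nat \<Rightarrow> (nat \<Rightarrow> complex) \<Rightarrow> (nat \<Rightarrow> complex vec) \<Rightarrow> nat \<Rightarrow> nat \<Rightarrow> complex mat" where
  "rho1 n c \<phi> m k = mat (qdim n) (qdim n) (\<lambda>(r, s).
     \<Sum>js\<in>samples m k. complex_of_real (sample_prob c m js) *
        (sampled_state n c \<phi> m js $ r * cnj (sampled_state n c \<phi> m js $ s)))"

end

theory Submission
  imports Defs "Jordan_Normal_Form.Jordan_Normal_Form_Uniqueness" "Jordan_Normal_Form.Jordan_Normal_Form_Existence"
begin


definition adj :: "complex mat \<Rightarrow> complex mat" where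
  "adj A = mat (dim_col A) (dim_row A) (\<lambda>(i,j). cnj (A $$ (j,i)))"

definition herm :: "nat \<Rightarrow> complex mat \<Rightarrow> bool" where
  "herm N A \<longleftrightarrow> A \<in> carrier_mat N N \<and> (\<forall>i<N. \<forall>j<N. A $$ (j,i) = cnj (A $$ (i,j)))"

lemma adj_carrier[simp]: "A \<in> carrier_mat n m \<Longrightarrow> adj A \<in> carrier_mat m n"
  by (auto simp: adj_def)
lemma adj_dims[simp]: "dim_row (adj A) = dim_col A" "dim_col (adj A) = dim_row A"
  by (auto simp: adj_def)
lemma adj_index[simp]: "i < dim_col A \<Longrightarrow> j < dim_row A \<Longrightarrow> adj A $$ (i,j) = cnj (A $$ (j,i))"
  by (auto simp: adj_def)

lemma adj_adj[simp]: "adj (adj A) = A"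
  by (rule eq_matI, auto)

lemma adj_mult: assumes "A \<in> carrier_mat n m" "B \<in> carrier_mat m p"
  shows "adj (A * B) = adj B * adj A"
proof (rule eq_matI)
  fix i j assume ij: "i < dim_row (adj B * adj A)" "j < dim_col (adj B * adj A)"
  then have i: "i < p" and j: "j < n" using assms by auto
  show "adj (A * B) $$ (i, j) = (adj B * adj A) $$ (i, j)"
    using assms i j by (simp add: scalar_prod_def row_def col_def mult.commute)
qed (use assms in auto)

lemma adj_one[simp]: "adj (1\<^sub>m n) = 1\<^sub>m n"
  by (rule eq_matI, auto)

lemma herm_adj: "herm N A \<longleftrightarrow> A \<in> carrier_mat N N \<and> adj A = A"
proof
  assume h: "herm N A"
  then have A: "A \<in> carrier_mat N N" unfolding herm_def by auto
  have "adj A = A"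
  proof (rule eq_matI)
    fix i j assume "i < dim_row A" "j < dim_col A"
    then have "i < N" "j < N" using A by auto
    moreover have "A $$ (i,j) = cnj (A $$ (j,i))" using h \<open>i < N\<close> \<open>j < N\<close> unfolding herm_def by blast
    ultimately show "adj A $$ (i, j) = A $$ (i, j)" using A by simp
  qed (use A in auto)
  then show "A \<in> carrier_mat N N \<and> adj A = A" using A by auto
next
  assume a: "A \<in> carrier_mat N N \<and> adj A = A"
  { fix i j assume "i < N" "j < N"
    then have "adj A $$ (j,i) = cnj (A $$ (i,j))" using conjunct1[OF a] by simp
    then have "A $$ (j,i) = cnj (A $$ (i,j))" by (simp only: conjunct2[OF a]) }
  note b = this
  show "herm N A" unfolding herm_def using conjunct1[OF a] b by blast
qed

lemma mat_adjoint_eq_adj: assumes "A \<in> carrier_mat n n" shows "mat_adjoint A = adj A"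
proof (rule eq_matI)
  fix i j assume "i < dim_row (adj A)" "j < dim_col (adj A)"
  then have i: "i < n" and j: "j < n" using assms by auto
  show "mat_adjoint A $$ (i, j) = adj A $$ (i, j)"
    unfolding mat_adjoint_def using assms i j by (simp add: mat_of_rows_index)
qed (use assms in \<open>auto simp: mat_adjoint_def\<close>)

lemma herm_D: assumes "herm N A" "i < N" "j < N" shows "cnj (A $$ (i,j)) = A $$ (j,i)"
proof -
  have "\<forall>i<N. \<forall>j<N. A $$ (j,i) = cnj (A $$ (i,j))" using assms(1) unfolding herm_def by blast
  then have "A $$ (j,i) = cnj (A $$ (i,j))" using assms(2,3) by blast
  then show ?thesis by (rule sym)
qed

lemma herm_carrier: "herm N A \<Longrightarrow> A \<in> carrier_mat N N"
  unfolding herm_def by blast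

lemma row_scalar: "A \<in> carrier_mat n m \<Longrightarrow> x \<in> carrier_vec m \<Longrightarrow> i < n \<Longrightarrow>
   row A i \<bullet> x = (\<Sum>j<m. A $$ (i,j) * x $ j)"
  by (auto simp: scalar_prod_def row_def atLeast0LessThan)

lemma mult_mat_vec_sum: "A \<in> carrier_mat n m \<Longrightarrow> x \<in> carrier_vec m \<Longrightarrow> i < n \<Longrightarrow>
   (A *\<^sub>v x) $ i = (\<Sum>j<m. A $$ (i,j) * x $ j)"
  by (auto simp: scalar_prod_def row_def atLeast0LessThan)

lemma herm_inner: assumes h: "herm N B" and x: "x \<in> carrier_vec N" and y: "y \<in> carrier_vec N"
  shows "(\<Sum>i<N. cnj ((B *\<^sub>v x) $ i) * y $ i) = (\<Sum>i<N. cnj (x $ i) * (B *\<^sub>v y) $ i)"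
proof -
  have B: "B \<in> carrier_mat N N" and hB: "\<And>i j. i<N \<Longrightarrow> j<N \<Longrightarrow> cnj (B $$ (i,j)) = B $$ (j,i)"
    using herm_D[OF h] herm_carrier[OF h] by auto
  have "(\<Sum>i<N. cnj ((B *\<^sub>v x) $ i) * y $ i) = (\<Sum>i<N. \<Sum>j<N. cnj (B $$ (i,j)) * cnj (x $ j) * y $ i)"
    using B x by (simp add: mult_mat_vec_sum row_scalar sum_distrib_right cnj_sum)
  also have "\<dots> = (\<Sum>i<N. \<Sum>j<N. B $$ (j,i) * cnj (x $ j) * y $ i)"
    by (intro sum.cong refl, simp add: hB)
  also have "\<dots> = (\<Sum>j<N. \<Sum>i<N. B $$ (j,i) * cnj (x $ j) * y $ i)"
    by (rule sum.swap)
  also have "\<dots> = (\<Sum>i<N. cnj (x $ i) * (B *\<^sub>v y) $ i)"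
    using B y by (simp add: mult_mat_vec_sum row_scalar sum_distrib_left mult_ac)
  finally show ?thesis .
qed

lemma sum_cnj_self: "(\<Sum>i<N. cnj (x $ i) * x $ i) = complex_of_real (\<Sum>i<N. (cmod (x $ i))\<^sup>2)"
proof -
  have "\<And>i. cnj (x $ i) * x $ i = complex_of_real ((cmod (x $ i))\<^sup>2)"
    by (subst mult.commute, rule complex_norm_square[symmetric])
  then show ?thesis by simp
qed

lemma sum_sq_zero: assumes "(\<Sum>i<N. (cmod (x $ i))\<^sup>2) = 0" "x \<in> carrier_vec N"
  shows "x = 0\<^sub>v N"
proof -
  have "\<forall>i\<in>{..<N}. (cmod (x $ i))\<^sup>2 = 0"
    using assms(1) by (subst sum_nonneg_eq_0_iff[symmetric], auto)
  then show ?thesis using assms(2) by (auto intro!: eq_vecI)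
qed

lemma herm_eig_real: assumes h: "herm N D" and v: "v \<in> carrier_vec N" and v0: "v \<noteq> 0\<^sub>v N"
  and ev: "D *\<^sub>v v = e \<cdot>\<^sub>v v"
  shows "Im e = 0"
proof -
  define s where "s = (\<Sum>i<N. (cmod (v $ i))\<^sup>2)"
  have s0: "s \<noteq> 0" using sum_sq_zero[where x=v and N=N] v v0 unfolding s_def by auto
  from herm_inner[OF h v v]
  have "(\<Sum>i<N. cnj (e * v $ i) * v $ i) = (\<Sum>i<N. cnj (v $ i) * (e * v $ i))"
    unfolding ev using v by simp
  then have "cnj e * (\<Sum>i<N. cnj (v $ i) * v $ i) = e * (\<Sum>i<N. cnj (v $ i) * v $ i)"
    by (simp add: sum_distrib_left mult_ac)
  then have "cnj e * s = e * s" unfolding sum_cnj_self s_def by simp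
  then have "cnj e = e" using s0 by simp
  then have "Im (cnj e) = Im e" by simp
  then show ?thesis by simp
qed

lemma herm_sq_kernel: assumes h: "herm N B" and v: "v \<in> carrier_vec N"
  and z: "B *\<^sub>v (B *\<^sub>v v) = 0\<^sub>v N"
  shows "B *\<^sub>v v = 0\<^sub>v N"
proof -
  have B: "B \<in> carrier_mat N N" using herm_carrier[OF h] .
  have Bv: "B *\<^sub>v v \<in> carrier_vec N" using B v by auto
  from herm_inner[OF h v Bv]
  have "(\<Sum>i<N. cnj ((B *\<^sub>v v) $ i) * (B *\<^sub>v v) $ i) = 0" unfolding z by simp
  then have "(\<Sum>i<N. (cmod ((B *\<^sub>v v) $ i))\<^sup>2) = 0" unfolding sum_cnj_self by (simp only: of_real_eq_0_iff)
  from sum_sq_zero[OF this Bv] show ?thesis .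
qed


lemma cnj_real: "Im e = 0 \<Longrightarrow> cnj e = e"
  by (simp add: complex_eq_iff)

lemma herm_char: assumes h: "herm N D" and e: "Im e = 0" shows "herm N (char_matrix D e)"
proof -
  have D: "D \<in> carrier_mat N N" using herm_carrier[OF h] .
  have C: "char_matrix D e \<in> carrier_mat N N" using D by simp
  have "char_matrix D e $$ (j,i) = cnj (char_matrix D e $$ (i,j))" if "i < N" "j < N" for i j
    using that D herm_D[OF h that] cnj_real[OF e] by (simp add: char_matrix_def)
  then show ?thesis unfolding herm_def using C by blast
qed

lemma kernel_dim_cong: assumes "mat_kernel A = mat_kernel B" "dim_col A = dim_col B"
  shows "kernel_dim A = kernel_dim B"
  unfolding kernel_dim_def using assms by simp

lemma sum_list_min_eq: fixes xs :: "nat list"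
  assumes "sum_list (map (min 2) xs) = sum_list (map (min 1) xs)"
  shows "\<forall>x\<in>set xs. x \<le> 1"
  using assms
proof (induction xs)
  case (Cons a xs)
  have "sum_list (map (min 1) xs) \<le> sum_list (map (min 2) xs)"
    by (rule sum_list_mono, simp)
  moreover have "min 1 a \<le> min 2 a" by simp
  ultimately have "min 2 a = min 1 a" "sum_list (map (min 2) xs) = sum_list (map (min 1) xs)"
    using Cons.prems by auto
  then show ?case using Cons.IH by auto
qed simp

lemma herm_jordan_blocks: assumes h: "herm N D" and j: "jordan_nf D n_as" and ne: "(n,e) \<in> set n_as"
  shows "n = 1 \<and> Im e = 0"
proof -
  have D: "D \<in> carrier_mat N N" using herm_carrier[OF h] .
  have n0: "n \<noteq> 0" using j ne unfolding jordan_nf_def by force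
  have "char_poly D = char_poly (jordan_matrix n_as)"
    using j unfolding jordan_nf_def by (simp add: char_poly_similar)
  also have "\<dots> = (\<Prod>(n, a)\<leftarrow>n_as. [:- a, 1:] ^ n)" by (rule jordan_matrix_char_poly)
  finally have cp: "char_poly D = (\<Prod>(n, a)\<leftarrow>n_as. [:- a, 1:] ^ n)" .
  have "poly (char_poly D) e = 0"
    unfolding cp poly_prod_list prod_list_zero_iff using ne n0 by force
  then have "eigenvalue D e" using eigenvalue_root_char_poly[OF D] by simp
  then obtain v where "eigenvector D v e" unfolding eigenvalue_def by blast
  then have v: "v \<in> carrier_vec N" "v \<noteq> 0\<^sub>v N" "D *\<^sub>v v = e \<cdot>\<^sub>v v"
    unfolding eigenvector_def using D by auto
  have e: "Im e = 0" by (rule herm_eig_real[OF h v])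
  define B where "B = char_matrix D e"
  have hB: "herm N B" unfolding B_def by (rule herm_char[OF h e])
  have B: "B \<in> carrier_mat N N" using herm_carrier[OF hB] .
  have p2: "B ^\<^sub>m 2 = B * B" using B by (simp add: numeral_2_eq_2)
  have p1: "B ^\<^sub>m 1 = B" using B by simp
  have "mat_kernel (B * B) = mat_kernel B"
  proof
    show "mat_kernel B \<subseteq> mat_kernel (B * B)" using mat_kernel_mult_subset[OF B B] .
    show "mat_kernel (B * B) \<subseteq> mat_kernel B"
    proof
      fix v assume "v \<in> mat_kernel (B * B)"
      then have v: "v \<in> carrier_vec N" "(B * B) *\<^sub>v v = 0\<^sub>v N" using B unfolding mat_kernel_def by auto
      then have "B *\<^sub>v (B *\<^sub>v v) = 0\<^sub>v N" using B by (simp add: assoc_mult_mat_vec)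
      then have "B *\<^sub>v v = 0\<^sub>v N" by (rule herm_sq_kernel[OF hB v(1)])
      then show "v \<in> mat_kernel B" using v B unfolding mat_kernel_def by auto
    qed
  qed
  then have "dim_gen_eigenspace D e 2 = dim_gen_eigenspace D e 1"
    unfolding dim_gen_eigenspace_def B_def[symmetric] p2 p1 using B
    by (intro kernel_dim_cong, auto)
  then have "sum_list (map (min 2) (map fst (filter (\<lambda>(n, e'). e' = e) n_as)))
     = sum_list (map (min 1) (map fst (filter (\<lambda>(n, e'). e' = e) n_as)))"
    unfolding dim_gen_eigenspace[OF j] .
  from sum_list_min_eq[OF this] have "n \<le> 1" using ne by force
  then show ?thesis using n0 e by simp
qed

definition diagm :: "complex list \<Rightarrow> complex mat" where
  "diagm xs = mat (length xs) (length xs) (\<lambda>(i,j). if i = j then xs ! i else 0)"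

lemma diagm_carrier[simp]: "diagm xs \<in> carrier_mat (length xs) (length xs)"
  and diagm_dims[simp]: "dim_row (diagm xs) = length xs" "dim_col (diagm xs) = length xs"
  by (auto simp: diagm_def)

lemma diagm_index[simp]: "i < length xs \<Longrightarrow> j < length xs \<Longrightarrow> diagm xs $$ (i,j) = (if i = j then xs ! i else 0)"
  by (auto simp: diagm_def)

lemma jordan_matrix_diag: "(\<forall>(n,a)\<in>set n_as. n = 1) \<Longrightarrow> jordan_matrix n_as = diagm (map snd n_as)"
proof (induction n_as)
  case Nil
  show ?case by (rule eq_matI, auto simp: jordan_matrix_def)
next
  case (Cons na rest)
  obtain n a where na: "na = (n,a)" by force
  with Cons.prems have n: "n = 1" by auto
  have IH: "jordan_matrix rest = diagm (map snd rest)" using Cons by auto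
  have L: "sum_list (map fst rest) = length rest"
    using arg_cong[OF IH, of dim_row] by simp
  show ?case unfolding na n jordan_matrix_Cons L IH
    by (rule eq_matI, auto simp: nth_Cons' jordan_block_def)
qed

lemma herm_diagonalize: assumes h: "herm N D"
  shows "\<exists>P Q ls. P \<in> carrier_mat N N \<and> Q \<in> carrier_mat N N \<and> P * Q = 1\<^sub>m N \<and> Q * P = 1\<^sub>m N
     \<and> length ls = N \<and> (\<forall>l\<in>set ls. Im l = 0) \<and> D = P * diagm ls * Q"
proof -
  have D: "D \<in> carrier_mat N N" using herm_carrier[OF h] .
  obtain as where "char_poly D = (\<Prod>a\<leftarrow>as. [:- a, 1:])" using char_poly_factorized[OF D] by blast
  then obtain n_as where j: "jordan_nf D n_as" using jordan_nf_exists[OF D] by blast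
  have all1: "\<forall>(n,a)\<in>set n_as. n = 1" using herm_jordan_blocks[OF h j] by blast
  have re: "\<forall>l\<in>set (map snd n_as). Im l = 0" using herm_jordan_blocks[OF h j] by force
  have "similar_mat D (jordan_matrix n_as)" using j unfolding jordan_nf_def by blast
  then obtain P Q where w: "similar_mat_wit D (jordan_matrix n_as) P Q" unfolding similar_mat_def by blast
  then have w': "{D, jordan_matrix n_as, P, Q} \<subseteq> carrier_mat N N" "P * Q = 1\<^sub>m N" "Q * P = 1\<^sub>m N"
     "D = P * jordan_matrix n_as * Q"
    unfolding similar_mat_wit_def Let_def using D by auto
  have J: "jordan_matrix n_as = diagm (map snd n_as)" by (rule jordan_matrix_diag[OF all1])
  have len: "length (map snd n_as) = N" using w'(1) unfolding J by auto
  show ?thesis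
    by (rule exI[of _ P], rule exI[of _ Q], rule exI[of _ "map snd n_as"], insert w' len re J, auto)
qed


lemma sum_list_count_real: fixes f :: "'a \<Rightarrow> real"
  shows "sum_list (map f xs) = (\<Sum>x\<in>set xs. real (count_list xs x) * f x)"
proof (induction xs)
  case (Cons a xs)
  have "(\<Sum>x\<in>set (a # xs). real (count_list (a # xs) x) * f x)
      = (\<Sum>x\<in>insert a (set xs). real (count_list xs x) * f x + (if a = x then f x else 0))"
    by (intro sum.cong refl, auto simp: algebra_simps)
  also have "\<dots> = (\<Sum>x\<in>insert a (set xs). real (count_list xs x) * f x) + f a"
    by (simp add: sum.distrib)
  also have "(\<Sum>x\<in>insert a (set xs). real (count_list xs x) * f x) = (\<Sum>x\<in>set xs. real (count_list xs x) * f x)"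
  proof (cases "a \<in> set xs")
    case False
    then have "count_list xs a = 0" by (simp add: count_list_0_iff)
    then show ?thesis using False by simp
  qed (simp add: insert_absorb)
  finally show ?case using Cons.IH by simp
qed simp

lemma order_linear_prod: fixes xs :: "complex list" shows "order z (\<Prod>a\<leftarrow>xs. [:- a, 1:]) = count_list xs z"
proof (induction xs)
  case Nil
  then show ?case by (simp add: order_0I)
next
  case (Cons a xs)
  have nz: "(\<Prod>a\<leftarrow>xs. [:- a, 1:]) \<noteq> (0 :: complex poly)"
    by (auto simp: prod_list_zero_iff)
  have nz1: "[:- a, 1:] \<noteq> (0 :: complex poly)" by simp
  have nz2: "[:- a, 1:] * (\<Prod>a\<leftarrow>xs. [:- a, 1:]) \<noteq> (0 :: complex poly)"
    by (rule no_zero_divisors[OF nz1 nz])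
  have o1: "order z [:- a, 1:] = (if z = a then 1 else 0)"
  proof (cases "z = a")
    case True then show ?thesis using order_power_n_n[of a 1] by simp
  next
    case False
    have "poly [:- a, 1:] z \<noteq> 0" using False by simp
    from order_0I[OF this] show ?thesis using False by simp
  qed
  show ?case using order_mult[OF nz2] o1 Cons.IH by simp
qed

lemma root_sum: fixes xs :: "complex list" and f :: "complex \<Rightarrow> real"
  shows "(\<Sum>z\<in>{z. poly (\<Prod>a\<leftarrow>xs. [:- a, 1:]) z = 0}. real (order z (\<Prod>a\<leftarrow>xs. [:- a, 1:])) * f z)
     = sum_list (map f xs)"
proof -
  have "{z. poly (\<Prod>a\<leftarrow>xs. [:- a, 1:]) z = 0} = set xs"
    by (auto simp: poly_prod_list prod_list_zero_iff)
  then show ?thesis unfolding order_linear_prod sum_list_count_real by simp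
qed

lemma diagm_mult: assumes "length ys = length xs"
  shows "diagm xs * diagm ys = diagm (map (\<lambda>i. xs ! i * ys ! i) [0..<length xs])"
proof (rule eq_matI)
  fix i j assume ij: "i < dim_row (diagm (map (\<lambda>i. xs ! i * ys ! i) [0..<length xs]))"
     "j < dim_col (diagm (map (\<lambda>i. xs ! i * ys ! i) [0..<length xs]))"
  then have i: "i < length xs" and j: "j < length xs" by auto
  have "(diagm xs * diagm ys) $$ (i,j) = (\<Sum>k\<in>{0..<length xs}. diagm xs $$ (i,k) * diagm ys $$ (k,j))"
    using i j assms by (simp add: scalar_prod_def)
  also have "\<dots> = (\<Sum>k\<in>{0..<length xs}. if k = i then (if i = j then xs ! i * ys ! i else 0) else 0)"
    using assms i j by (intro sum.cong refl, auto simp: diagm_def)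
  also have "\<dots> = (if i = j then xs ! i * ys ! i else 0)" using i by simp
  finally show "(diagm xs * diagm ys) $$ (i, j) = diagm (map (\<lambda>i. xs ! i * ys ! i) [0..<length xs]) $$ (i, j)"
    using i j by simp
qed (use assms in auto)

lemma diag_mat_diagm[simp]: "diag_mat (diagm xs) = xs"
proof -
  have "map (\<lambda>i. diagm xs $$ (i, i)) [0..<length xs] = map (\<lambda>i. xs ! i) [0..<length xs]"
    by (rule map_cong, auto)
  then show ?thesis unfolding diag_mat_def by (simp add: map_nth)
qed

lemma upper_triangular_diagm: "upper_triangular (diagm xs)"
  unfolding upper_triangular_def by auto

lemma cmod_real: "Im l = 0 \<Longrightarrow> sqrt (Re (l * l)) = cmod l"
  by (simp add: cmod_def)

lemma trace_norm_herm: assumes h: "herm N D"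
  and P: "P \<in> carrier_mat N N" and Q: "Q \<in> carrier_mat N N" and PQ: "P * Q = 1\<^sub>m N" and QP: "Q * P = 1\<^sub>m N"
  and len: "length ls = N" and re: "\<forall>l\<in>set ls. Im l = 0" and DD: "D = P * diagm ls * Q"
  shows "trace_norm D = sum_list (map cmod ls)"
proof -
  have D: "D \<in> carrier_mat N N" using herm_carrier[OF h] .
  have L: "diagm ls \<in> carrier_mat N N" using len by auto
  define sq where "sq = map (\<lambda>i. ls ! i * ls ! i) [0..<length ls]"
  have L2: "diagm sq \<in> carrier_mat N N" using len unfolding sq_def by auto
  have adjD: "mat_adjoint D = D" using mat_adjoint_eq_adj[OF D] h unfolding herm_adj by simp
  have "D * D = P * diagm ls * (Q * P) * diagm ls * Q"
    unfolding DD using P Q L by (simp add: assoc_mult_mat[of _ N N _ N _ N] left_mult_one_mat right_mult_one_mat)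
  also have "\<dots> = P * (diagm ls * diagm ls) * Q"
    unfolding QP using P Q L by (simp add: assoc_mult_mat[of _ N N _ N _ N] left_mult_one_mat right_mult_one_mat)
  also have "diagm ls * diagm ls = diagm sq" unfolding sq_def by (rule diagm_mult, simp)
  finally have DD2: "D * D = P * diagm sq * Q" .
  have "similar_mat_wit (D * D) (diagm sq) P Q"
    unfolding similar_mat_wit_def Let_def using D P Q L2 PQ QP DD2 by auto
  then have "char_poly (D * D) = char_poly (diagm sq)"
    by (intro char_poly_similar, auto simp: similar_mat_def)
  also have "\<dots> = (\<Prod>a\<leftarrow>sq. [:- a, 1:])"
    using char_poly_upper_triangular[OF diagm_carrier upper_triangular_diagm] by simp
  finally have cp: "char_poly (D * D) = (\<Prod>a\<leftarrow>sq. [:- a, 1:])" .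
  have "trace_norm D = sum_list (map (\<lambda>z. sqrt (Re z)) sq)"
    unfolding trace_norm_def Let_def adjD cp root_sum ..
  also have "map (\<lambda>z. sqrt (Re z)) sq = map cmod ls"
  proof (rule nth_equalityI)
    show "length (map (\<lambda>z. sqrt (Re z)) sq) = length (map cmod ls)" unfolding sq_def by simp
    fix i assume "i < length (map (\<lambda>z. sqrt (Re z)) sq)"
    then have i: "i < length ls" unfolding sq_def by simp
    have "Im (ls ! i) = 0" using re nth_mem[OF i] by blast
    then show "map (\<lambda>z. sqrt (Re z)) sq ! i = map cmod ls ! i"
      unfolding sq_def using i cmod_real by simp
  qed
  finally show ?thesis .
qed




definition tr :: "complex mat \<Rightarrow> complex" where
  "tr A = (\<Sum>i<dim_row A. A $$ (i,i))"

lemma tr_comm: assumes "A \<in> carrier_mat n m" "B \<in> carrier_mat m n"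
  shows "tr (A * B) = tr (B * A)"
proof -
  have "tr (A * B) = (\<Sum>i<n. \<Sum>k<m. A $$ (i,k) * B $$ (k,i))"
    unfolding tr_def using assms by (simp add: scalar_prod_def row_def col_def atLeast0LessThan)
  also have "\<dots> = (\<Sum>k<m. \<Sum>i<n. B $$ (k,i) * A $$ (i,k))"
    by (subst sum.swap, simp add: mult.commute)
  also have "\<dots> = tr (B * A)"
    unfolding tr_def using assms by (simp add: scalar_prod_def row_def col_def atLeast0LessThan)
  finally show ?thesis .
qed

lemma tr_diagm: "tr (diagm xs) = sum_list xs"
  unfolding tr_def by (simp add: sum_list_sum_nth atLeast0LessThan)

lemma mat_diagm_index: assumes M: "M \<in> carrier_mat n N" and len: "length xs = N" and i: "i < n" and j: "j < N"
  shows "(M * diagm xs) $$ (i,j) = M $$ (i,j) * xs ! j"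
proof -
  have "(M * diagm xs) $$ (i,j) = (\<Sum>k\<in>{0..<N}. M $$ (i,k) * diagm xs $$ (k,j))"
    using assms by (simp add: scalar_prod_def row_def col_def)
  also have "\<dots> = (\<Sum>k\<in>{0..<N}. if k = j then M $$ (i,j) * xs ! j else 0)"
    using len j by (intro sum.cong refl, auto)
  also have "\<dots> = M $$ (i,j) * xs ! j" using j by simp
  finally show ?thesis .
qed

lemma diagm_mat_index: assumes M: "M \<in> carrier_mat N n" and len: "length xs = N" and i: "i < N" and j: "j < n"
  shows "(diagm xs * M) $$ (i,j) = xs ! i * M $$ (i,j)"
proof -
  have "(diagm xs * M) $$ (i,j) = (\<Sum>k\<in>{0..<N}. diagm xs $$ (i,k) * M $$ (k,j))"
    using assms by (simp add: scalar_prod_def row_def col_def)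
  also have "\<dots> = (\<Sum>k\<in>{0..<N}. if k = i then xs ! i * M $$ (i,j) else 0)"
    using len i by (intro sum.cong refl, auto)
  also have "\<dots> = xs ! i * M $$ (i,j)" using i by simp
  finally show ?thesis .
qed

lemma adj_diagm_real: assumes "\<forall>l\<in>set xs. Im l = 0" shows "adj (diagm xs) = diagm xs"
proof (rule eq_matI)
  fix i j assume "i < dim_row (diagm xs)" "j < dim_col (diagm xs)"
  then have i: "i < length xs" and j: "j < length xs" by auto
  have "Im (xs ! i) = 0" using assms nth_mem[OF i] by blast
  then show "adj (diagm xs) $$ (i, j) = diagm xs $$ (i, j)" using i j by (auto simp: cnj_real)
qed auto

lemma sign_op: assumes h: "herm N D"
  and P: "P \<in> carrier_mat N N" and Q: "Q \<in> carrier_mat N N" and PQ: "P * Q = 1\<^sub>m N" and QP: "Q * P = 1\<^sub>m N"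
  and len: "length ls = N" and re: "\<forall>l\<in>set ls. Im l = 0" and DD: "D = P * diagm ls * Q"
  shows "\<exists>S. herm N S \<and> S * S = 1\<^sub>m N \<and> tr (D * S) = complex_of_real (sum_list (map cmod ls))"
proof -
  define sg where "sg = map (\<lambda>l. if 0 \<le> Re l then 1 else - 1 :: complex) ls"
  define L where "L = diagm ls"
  define Sg where "Sg = diagm sg"
  define G where "G = adj P * P"
  define S where "S = P * Sg * Q"
  have lsg: "length sg = N" unfolding sg_def using len by simp
  have L: "L \<in> carrier_mat N N" unfolding L_def using len by auto
  have Sg: "Sg \<in> carrier_mat N N" unfolding Sg_def using lsg by auto
  have aP: "adj P \<in> carrier_mat N N" and aQ: "adj Q \<in> carrier_mat N N" using P Q by auto
  have G: "G \<in> carrier_mat N N" unfolding G_def using P aP by auto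
  have D: "D \<in> carrier_mat N N" using herm_carrier[OF h] .
  have resg: "\<forall>l\<in>set sg. Im l = 0" unfolding sg_def by auto
  have adjL: "adj L = L" unfolding L_def by (rule adj_diagm_real[OF re])
  have adjSg: "adj Sg = Sg" unfolding Sg_def by (rule adj_diagm_real[OF resg])
  have adjD: "adj D = D" using h unfolding herm_adj by simp
  note car = P Q L Sg aP aQ G
  note as = assoc_mult_mat[of _ N N _ N _ N] mult_carrier_mat[of _ N N _ N]
  note as' = assoc_mult_mat[of _ N N _ N _ N]
  have c1: "Q * (P * X) = X" if "X \<in> carrier_mat N N" for X
    using that car QP by (simp flip: as')
  have c2: "adj P * (adj Q * X) = X" if "X \<in> carrier_mat N N" for X
  proof -
    have "adj P * adj Q = 1\<^sub>m N" using adj_mult[OF Q P] QP by simp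
    then show ?thesis using that car by (simp flip: as')
  qed
  have c3: "adj Q * (adj P * X) = X" if "X \<in> carrier_mat N N" for X
  proof -
    have "adj Q * adj P = 1\<^sub>m N" using adj_mult[OF P Q] PQ by simp
    then show ?thesis using that car by (simp flip: as')
  qed
  have adjD2: "adj D = adj Q * (L * adj P)"
    unfolding DD L_def[symmetric] using car by (simp add: adj_mult[of _ N N _ N] adjL as)
  have GL: "G * L = L * G"
  proof -
    have "adj P * (D * P) = G * L"
      unfolding DD L_def[symmetric] G_def using car QP by (simp add: as c1)
    moreover have "adj P * (adj D * P) = L * G"
      unfolding adjD2 G_def using car by (simp add: as c2)
    ultimately show ?thesis using adjD by simp
  qed
  have GS: "G * Sg = Sg * G"
  proof (rule eq_matI)
    fix i j assume "i < dim_row (Sg * G)" "j < dim_col (Sg * G)"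
    then have i: "i < N" and j: "j < N" using Sg G by auto
    have "(G * L) $$ (i,j) = (L * G) $$ (i,j)" using GL by simp
    then have e: "G $$ (i,j) * ls ! j = ls ! i * G $$ (i,j)"
      unfolding L_def using mat_diagm_index[OF G len i j] diagm_mat_index[OF G len i j] by simp
    have "G $$ (i,j) * sg ! j = sg ! i * G $$ (i,j)"
    proof (cases "G $$ (i,j) = 0")
      case False
      then have "ls ! j = ls ! i" using e by (simp add: mult.commute)
      then show ?thesis unfolding sg_def using i j len by (simp add: mult.commute)
    qed simp
    then show "(G * Sg) $$ (i, j) = (Sg * G) $$ (i, j)"
      unfolding Sg_def using mat_diagm_index[OF G lsg i j] diagm_mat_index[OF G lsg i j] by simp
  qed (use G Sg in auto)
  have GQ: "G * Q = adj P" unfolding G_def using car PQ by (simp add: as)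
  have hS: "herm N S"
  proof -
    have "adj S = adj Q * (Sg * adj P)"
      unfolding S_def using car by (simp add: adj_mult[of _ N N _ N] adjSg as)
    also have "\<dots> = adj Q * ((Sg * G) * Q)" unfolding GQ[symmetric] using car by (simp add: as)
    also have "\<dots> = adj Q * (adj P * (P * (Sg * Q)))" unfolding GS[symmetric] unfolding G_def using car by (simp add: as)
    also have "\<dots> = S" unfolding S_def using car by (simp add: as c3)
    finally show ?thesis unfolding herm_adj S_def using car by simp
  qed
  have SgSg: "Sg * Sg = 1\<^sub>m N"
  proof -
    have "Sg * Sg = diagm (map (\<lambda>i. sg ! i * sg ! i) [0..<length sg])"
      unfolding Sg_def by (rule diagm_mult, simp)
    also have "\<dots> = 1\<^sub>m N"
      by (rule eq_matI, auto simp: lsg sg_def len)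
    finally show ?thesis .
  qed
  have SS: "S * S = 1\<^sub>m N"
  proof -
    have "S * S = P * ((Sg * Sg) * Q)" unfolding S_def using car by (simp add: as c1)
    then show ?thesis unfolding SgSg using car PQ by simp
  qed
  have "tr (D * S) = tr (P * ((L * Sg) * Q))"
    unfolding S_def DD L_def[symmetric] using car by (simp add: as c1)
  also have "\<dots> = tr (((L * Sg) * Q) * P)" using car by (intro tr_comm[of _ N N], auto)
  also have "((L * Sg) * Q) * P = L * Sg" using car QP by (simp add: as)
  also have "L * Sg = diagm (map (\<lambda>i. ls ! i * sg ! i) [0..<length ls])"
    unfolding L_def Sg_def by (rule diagm_mult, simp add: lsg len)
  also have "tr \<dots> = sum_list (map (\<lambda>i. ls ! i * sg ! i) [0..<length ls])" by (rule tr_diagm)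
  also have "\<dots> = sum_list (map (\<lambda>i. complex_of_real (cmod (ls ! i))) [0..<length ls])"
  proof (intro arg_cong[where f=sum_list] map_cong refl)
    fix i assume "i \<in> set [0..<length ls]"
    then have i: "i < length ls" by simp
    have "Im (ls ! i) = 0" using re nth_mem[OF i] by blast
    then show "ls ! i * sg ! i = complex_of_real (cmod (ls ! i))"
      unfolding sg_def using i by (cases "ls ! i", auto simp: cmod_def complex_eq_iff)
  qed
  also have "\<dots> = complex_of_real (sum_list (map cmod ls))"
  proof -
    have "sum_list (map (\<lambda>i. complex_of_real (cmod (ls ! i))) [0..<length ls])
       = (\<Sum>i\<in>{0..<length ls}. complex_of_real (cmod (ls ! i)))"
      by (simp add: sum_set_upt_conv_sum_list_nat[symmetric])
    also have "\<dots> = complex_of_real (\<Sum>i\<in>{0..<length ls}. cmod (ls ! i))" by simp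
    also have "(\<Sum>i\<in>{0..<length ls}. cmod (ls ! i)) = sum_list (map cmod ls)"
      by (simp add: sum_list_sum_nth)
    finally show ?thesis .
  qed
  finally show ?thesis using hS SS by blast
qed

lemma key_sign: assumes h: "herm N D"
  shows "\<exists>S. herm N S \<and> S * S = 1\<^sub>m N \<and> complex_of_real (trace_norm D) = tr (D * S)"
proof -
  obtain P Q ls where d: "P \<in> carrier_mat N N" "Q \<in> carrier_mat N N" "P * Q = 1\<^sub>m N" "Q * P = 1\<^sub>m N"
     "length ls = N" "\<forall>l\<in>set ls. Im l = 0" "D = P * diagm ls * Q"
    using herm_diagonalize[OF h] by blast
  from sign_op[OF h d] trace_norm_herm[OF h d] show ?thesis by auto
qed




lemma samples_Suc_eq: "samples m (Suc k) = (\<lambda>(j,js). j # js) ` ({..<m} \<times> samples m k)"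
proof
  show "samples m (Suc k) \<subseteq> (\<lambda>(j,js). j # js) ` ({..<m} \<times> samples m k)"
  proof
    fix xs assume "xs \<in> samples m (Suc k)"
    then have xs: "length xs = Suc k" "set xs \<subseteq> {..<m}" unfolding samples_def by auto
    then obtain j js where "xs = j # js" by (cases xs, auto)
    with xs show "xs \<in> (\<lambda>(j,js). j # js) ` ({..<m} \<times> samples m k)"
      unfolding samples_def by (auto intro!: image_eqI[of _ _ "(j,js)"])
  qed
  show "(\<lambda>(j,js). j # js) ` ({..<m} \<times> samples m k) \<subseteq> samples m (Suc k)"
    unfolding samples_def by auto
qed

lemma finite_samples[simp]: "finite (samples m k)"
proof -
  have "samples m k = {xs. set xs \<subseteq> {..<m} \<and> length xs = k}" unfolding samples_def by auto
  then show ?thesis using finite_lists_length_eq[of "{..<m}" k] by simp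
qed

lemma sum_samples_Suc: "(\<Sum>js\<in>samples m (Suc k). f js) = (\<Sum>j<m. \<Sum>js\<in>samples m k. f (j # js))"
proof -
  have inj: "inj_on (\<lambda>(j,js). j # js) ({..<m} \<times> samples m k)" by (auto simp: inj_on_def)
  have "(\<Sum>js\<in>samples m (Suc k). f js) = (\<Sum>x\<in>{..<m} \<times> samples m k. f (case x of (j,js) \<Rightarrow> j # js))"
    unfolding samples_Suc_eq by (subst sum.reindex[OF inj], simp add: o_def)
  also have "\<dots> = (\<Sum>j<m. \<Sum>js\<in>samples m k. f (j # js))"
    by (simp add: sum.cartesian_product split_def)
  finally show ?thesis .
qed

lemma samples_0[simp]: "samples m 0 = {[]}" unfolding samples_def by auto

lemma sum_samples_prod: fixes F :: "nat \<Rightarrow> nat \<Rightarrow> 'a :: comm_semiring_1"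
  shows "(\<Sum>js\<in>samples m k. \<Prod>a<k. F a (js ! a)) = (\<Prod>a<k. \<Sum>j<m. F a j)"
proof (induction k arbitrary: F)
  case 0
  then show ?case by simp
next
  case (Suc k)
  have "(\<Sum>js\<in>samples m (Suc k). \<Prod>a<Suc k. F a (js ! a))
      = (\<Sum>j<m. \<Sum>js\<in>samples m k. F 0 j * (\<Prod>a<k. F (Suc a) (js ! a)))"
    unfolding sum_samples_Suc prod.lessThan_Suc_shift by simp
  also have "\<dots> = (\<Sum>j<m. F 0 j * (\<Sum>js\<in>samples m k. \<Prod>a<k. F (Suc a) (js ! a)))"
    by (simp add: sum_distrib_left)
  also have "\<dots> = (\<Sum>j<m. F 0 j) * (\<Prod>a<k. \<Sum>j<m. F (Suc a) j)"
    using Suc.IH[of "\<lambda>a. F (Suc a)"] by (simp add: sum_distrib_right)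
  also have "\<dots> = (\<Prod>a<Suc k. \<Sum>j<m. F a j)" unfolding prod.lessThan_Suc_shift by simp
  finally show ?case .
qed

lemma prod_if_one: fixes b :: "nat \<Rightarrow> 'a :: comm_monoid_mult"
  shows "a < k \<Longrightarrow> (\<Prod>g<k. if g = a then b g else 1) = b a"
  by (simp add: prod.delta)

lemma sample_prob_samples: "js \<in> samples m k \<Longrightarrow>
   sample_prob c m js = (\<Prod>a<k. cmod (c (js ! a)) / l1_norm c m)"
  unfolding sample_prob_def samples_def by simp

lemma expect2: fixes f g :: "nat \<Rightarrow> complex"
  assumes a: "a < k" and b: "b < k" and s1: "(\<Sum>j<m. cmod (c j) / l1_norm c m) = 1"
  shows "(\<Sum>js\<in>samples m k. complex_of_real (sample_prob c m js) * (f (js ! a) * g (js ! b)))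
   = (if a = b then (\<Sum>j<m. complex_of_real (cmod (c j) / l1_norm c m) * (f j * g j))
      else (\<Sum>j<m. complex_of_real (cmod (c j) / l1_norm c m) * f j) *
           (\<Sum>j<m. complex_of_real (cmod (c j) / l1_norm c m) * g j))"
proof -
  define \<pi> where "\<pi> j = complex_of_real (cmod (c j) / l1_norm c m)" for j
  have "(\<Sum>j<m. \<pi> j) = complex_of_real (\<Sum>j<m. cmod (c j) / l1_norm c m)"
    unfolding \<pi>_def by (simp only: of_real_sum)
  then have s1': "(\<Sum>j<m. \<pi> j) = 1" using s1 by simp
  define F where "F g' j = \<pi> j * ((if g' = a then f j else 1) * (if g' = b then g j else 1))" for g' j
  have "(\<Sum>js\<in>samples m k. complex_of_real (sample_prob c m js) * (f (js ! a) * g (js ! b)))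
      = (\<Sum>js\<in>samples m k. \<Prod>g'<k. F g' (js ! g'))"
  proof (intro sum.cong refl)
    fix js assume js: "js \<in> samples m k"
    have "(\<Prod>g'<k. F g' (js ! g')) = (\<Prod>g'<k. \<pi> (js ! g')) *
       ((\<Prod>g'<k. if g' = a then f (js ! g') else 1) * (\<Prod>g'<k. if g' = b then g (js ! g') else 1))"
      unfolding F_def by (simp add: prod.distrib)
    also have "\<dots> = complex_of_real (sample_prob c m js) * (f (js ! a) * g (js ! b))"
      unfolding sample_prob_samples[OF js] \<pi>_def using a b by (simp add: prod.delta)
    finally show "complex_of_real (sample_prob c m js) * (f (js ! a) * g (js ! b)) = (\<Prod>g'<k. F g' (js ! g'))" ..
  qed
  also have "\<dots> = (\<Prod>g'<k. \<Sum>j<m. F g' j)" by (rule sum_samples_prod)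
  also have "\<dots> = (if a = b then (\<Sum>j<m. \<pi> j * (f j * g j))
      else (\<Sum>j<m. \<pi> j * f j) * (\<Sum>j<m. \<pi> j * g j))"
  proof (cases "a = b")
    case True
    have "(\<Prod>g'<k. \<Sum>j<m. F g' j) = (\<Prod>g'<k. if g' = a then (\<Sum>j<m. \<pi> j * (f j * g j)) else 1)"
      by (intro prod.cong refl, auto simp: F_def True s1')
    also have "\<dots> = (\<Sum>j<m. \<pi> j * (f j * g j))" using a by (simp add: prod.delta)
    finally show ?thesis using True by simp
  next
    case False
    have "(\<Prod>g'<k. \<Sum>j<m. F g' j) = (\<Prod>g'<k. (if g' = a then (\<Sum>j<m. \<pi> j * f j) else 1)
        * (if g' = b then (\<Sum>j<m. \<pi> j * g j) else 1))"
      by (intro prod.cong refl, auto simp: F_def False s1')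
    also have "\<dots> = (\<Sum>j<m. \<pi> j * f j) * (\<Sum>j<m. \<pi> j * g j)"
      using a b by (simp add: prod.distrib prod.delta)
    finally show ?thesis using False by simp
  qed
  finally show ?thesis unfolding \<pi>_def .
qed

lemma expect0: assumes s1: "(\<Sum>j<m. cmod (c j) / l1_norm c m) = 1"
  shows "(\<Sum>js\<in>samples m k. sample_prob c m js) = 1"
proof -
  have "(\<Sum>js\<in>samples m k. sample_prob c m js) = (\<Sum>js\<in>samples m k. \<Prod>a<k. cmod (c (js ! a)) / l1_norm c m)"
    by (intro sum.cong refl, rule sample_prob_samples)
  also have "\<dots> = (\<Prod>a<k. \<Sum>j<m. cmod (c j) / l1_norm c m)" by (rule sum_samples_prod)
  also have "\<dots> = 1" using s1 by simp
  finally show ?thesis .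
qed

lemma sample_prob_nonneg: "sample_prob c m js \<ge> 0"
  unfolding sample_prob_def l1_norm_def by (auto intro!: prod_nonneg divide_nonneg_nonneg sum_nonneg)


lemma dsum: fixes A B :: complex
  shows "(\<Sum>a<k. \<Sum>b<k. if a = b then A else B) = of_nat k * A + (of_nat k * of_nat k - of_nat k) * B"
proof -
  have "(\<Sum>b<k. if a = b then A else B) = of_nat k * B + (A - B)" if "a < k" for a
  proof -
    have "(\<Sum>b<k. if a = b then A else B) = (\<Sum>b<k. B + (if a = b then A - B else 0))"
      by (intro sum.cong refl, auto)
    also have "\<dots> = of_nat k * B + (A - B)" using that by (simp add: sum.distrib)
    finally show ?thesis .
  qed
  then have "(\<Sum>a<k. \<Sum>b<k. if a = b then A else B) = (\<Sum>a<k. of_nat k * B + (A - B))" by simp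
  also have "\<dots> = of_nat k * A + (of_nat k * of_nat k - of_nat k) * B" by (simp add: algebra_simps)
  finally show ?thesis .
qed

lemma phase_sq: fixes z :: complex
  shows "z / complex_of_real (cmod z) * cnj (z / complex_of_real (cmod z)) = (if z = 0 then 0 else 1)"
proof (cases "z = 0")
  case False
  have "z * cnj z = complex_of_real ((cmod z)\<^sup>2)" by (rule complex_norm_square[symmetric])
  then show ?thesis using False by (simp add: field_simps power2_eq_square)
qed simp

lemma phase_mult: fixes z :: complex and L :: real
  shows "complex_of_real (cmod z / L) * (z / complex_of_real (cmod z) * y) = z * y / complex_of_real L"
proof (cases "z = 0")
  case False
  then show ?thesis by (simp add: field_simps)
qed simp

lemma phase_mult_cnj: fixes z :: complex and L :: real
  shows "complex_of_real (cmod z / L) * cnj (z / complex_of_real (cmod z) * y) = cnj (z * y) / complex_of_real L"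
proof (cases "z = 0")
  case False
  then show ?thesis by (simp add: field_simps)
qed simp

lemma omega_index: assumes js: "js \<in> samples m k" and r: "r < qdim n"
  shows "Omega n c \<phi> m js $ r = complex_of_real (l1_norm c m / real k) *
     (\<Sum>a<k. c (js ! a) / complex_of_real (cmod (c (js ! a))) * \<phi> (js ! a) $ r)"
  using js r unfolding Omega_def samples_def by simp

lemma alg1: fixes A X Y :: complex and t L :: real and k :: nat
  assumes L: "L \<noteq> 0"
  shows "complex_of_real t * (of_nat k * (A / complex_of_real L) + (of_nat k * of_nat k - of_nat k) *
     (X / complex_of_real L * (Y / complex_of_real L)))
   = complex_of_real (t * real k / L) * A + complex_of_real (t * (real k * real k - real k) / (L * L)) * (X * Y)"
proof -
  have L': "complex_of_real L \<noteq> 0" using L by simp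
  show ?thesis using L' by (simp add: field_simps)
qed

lemma moment2: assumes k: "k \<ge> 1" and Lpos: "l1_norm c m > 0" and r: "r < qdim n" and s: "s < qdim n"
  shows "(\<Sum>js\<in>samples m k. complex_of_real (sample_prob c m js) *
       (Omega n c \<phi> m js $ r * cnj (Omega n c \<phi> m js $ s)))
   = complex_of_real (1 - 1 / real k) * ((\<Sum>j<m. c j * \<phi> j $ r) * cnj (\<Sum>j<m. c j * \<phi> j $ s))
     + complex_of_real (l1_norm c m / real k) *
       (\<Sum>j<m. complex_of_real (cmod (c j)) * (\<phi> j $ r * cnj (\<phi> j $ s)))"
proof -
  define L where "L = l1_norm c m"
  define w where "w j i = c j / complex_of_real (cmod (c j)) * \<phi> j $ i" for j i
  define \<pi> where "\<pi> j = complex_of_real (cmod (c j) / L)" for j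
  define A0 where "A0 = (\<Sum>j<m. complex_of_real (cmod (c j)) * (\<phi> j $ r * cnj (\<phi> j $ s)))"
  define B0 where "B0 = (\<Sum>j<m. c j * \<phi> j $ r) * cnj (\<Sum>j<m. c j * \<phi> j $ s)"
  have L0: "L \<noteq> 0" using Lpos unfolding L_def by simp
  have s1: "(\<Sum>j<m. cmod (c j) / l1_norm c m) = 1"
    using L0 unfolding L_def l1_norm_def by (simp add: sum_divide_distrib[symmetric])
  have "(\<Sum>js\<in>samples m k. complex_of_real (sample_prob c m js) *
       (Omega n c \<phi> m js $ r * cnj (Omega n c \<phi> m js $ s)))
     = (\<Sum>js\<in>samples m k. complex_of_real ((L / real k)\<^sup>2) *
        (\<Sum>a<k. \<Sum>b<k. complex_of_real (sample_prob c m js) * (w (js ! a) r * cnj (w (js ! b) s))))"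
  proof (intro sum.cong refl)
    fix js assume js: "js \<in> samples m k"
    show "complex_of_real (sample_prob c m js) * (Omega n c \<phi> m js $ r * cnj (Omega n c \<phi> m js $ s))
      = complex_of_real ((L / real k)\<^sup>2) *
        (\<Sum>a<k. \<Sum>b<k. complex_of_real (sample_prob c m js) * (w (js ! a) r * cnj (w (js ! b) s)))"
      unfolding omega_index[OF js r] omega_index[OF js s] w_def L_def
      by (simp add: cnj_sum sum_product sum_distrib_left power2_eq_square mult_ac, subst sum.swap, simp add: mult_ac)
  qed
  also have "\<dots> = complex_of_real ((L / real k)\<^sup>2) *
      (\<Sum>a<k. \<Sum>b<k. \<Sum>js\<in>samples m k. complex_of_real (sample_prob c m js) * (w (js ! a) r * cnj (w (js ! b) s)))"
    by (simp add: sum_distrib_left sum.swap[of _ "samples m k"])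
  also have "\<dots> = complex_of_real ((L / real k)\<^sup>2) *
      (\<Sum>a<k. \<Sum>b<k. if a = b then (\<Sum>j<m. \<pi> j * (w j r * cnj (w j s)))
         else (\<Sum>j<m. \<pi> j * w j r) * (\<Sum>j<m. \<pi> j * cnj (w j s)))"
    unfolding \<pi>_def L_def
    by (intro arg_cong[where f="\<lambda>x. _ * x"] sum.cong refl expect2[OF _ _ s1], auto)
  also have "\<dots> = complex_of_real ((L / real k)\<^sup>2) *
      (of_nat k * (\<Sum>j<m. \<pi> j * (w j r * cnj (w j s))) +
       (of_nat k * of_nat k - of_nat k) * ((\<Sum>j<m. \<pi> j * w j r) * (\<Sum>j<m. \<pi> j * cnj (w j s))))"
    by (simp only: dsum)
  also have "(\<Sum>j<m. \<pi> j * (w j r * cnj (w j s))) = A0 / complex_of_real L"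
  proof -
    have "\<pi> j * (w j r * cnj (w j s)) = complex_of_real (cmod (c j)) * (\<phi> j $ r * cnj (\<phi> j $ s)) / complex_of_real L" for j
    proof -
      have "\<pi> j * (w j r * cnj (w j s)) = complex_of_real (cmod (c j) / L) *
         ((c j / complex_of_real (cmod (c j)) * cnj (c j / complex_of_real (cmod (c j)))) * (\<phi> j $ r * cnj (\<phi> j $ s)))"
        unfolding \<pi>_def w_def by (simp add: mult_ac)
      also have "\<dots> = complex_of_real (cmod (c j)) * (\<phi> j $ r * cnj (\<phi> j $ s)) / complex_of_real L"
        unfolding phase_sq by simp
      finally show ?thesis .
    qed
    then show ?thesis unfolding A0_def by (simp add: sum_divide_distrib)
  qed
  also have "(\<Sum>j<m. \<pi> j * w j r) = (\<Sum>j<m. c j * \<phi> j $ r) / complex_of_real L"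
    unfolding \<pi>_def w_def phase_mult by (simp add: sum_divide_distrib)
  also have "(\<Sum>j<m. \<pi> j * cnj (w j s)) = cnj (\<Sum>j<m. c j * \<phi> j $ s) / complex_of_real L"
    unfolding \<pi>_def w_def phase_mult_cnj by (simp add: sum_divide_distrib cnj_sum)
  finally have eq: "(\<Sum>js\<in>samples m k. complex_of_real (sample_prob c m js) *
       (Omega n c \<phi> m js $ r * cnj (Omega n c \<phi> m js $ s))) =
     complex_of_real ((L / real k)\<^sup>2) *
      (of_nat k * (A0 / complex_of_real L) +
       (of_nat k * of_nat k - of_nat k) * ((\<Sum>j<m. c j * \<phi> j $ r) / complex_of_real L *
          (cnj (\<Sum>j<m. c j * \<phi> j $ s) / complex_of_real L)))" .
  have k0: "real k \<noteq> 0" using k by simp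
  have x1: "(L / real k)\<^sup>2 * real k / L = L / real k" using L0 k0 by (simp add: field_simps power2_eq_square)
  have x2: "(L / real k)\<^sup>2 * (real k * real k - real k) / (L * L) = 1 - 1 / real k"
    using L0 k0 by (simp add: field_simps power2_eq_square)
  have "complex_of_real ((L / real k)\<^sup>2) *
      (of_nat k * (A0 / complex_of_real L) +
       (of_nat k * of_nat k - of_nat k) * ((\<Sum>j<m. c j * \<phi> j $ r) / complex_of_real L *
          (cnj (\<Sum>j<m. c j * \<phi> j $ s) / complex_of_real L)))
     = complex_of_real ((L / real k)\<^sup>2 * real k / L) * A0 +
       complex_of_real ((L / real k)\<^sup>2 * (real k * real k - real k) / (L * L)) * B0"
    unfolding B0_def by (rule alg1[OF L0])
  also have "\<dots> = complex_of_real (1 - 1 / real k) * B0 + complex_of_real (L / real k) * A0"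
    unfolding x1 x2 by simp
  finally show ?thesis using eq unfolding A0_def B0_def L_def by simp
qed




lemma weighted_cs: fixes w a :: "'i \<Rightarrow> real"
  assumes w: "\<And>i. i \<in> A \<Longrightarrow> w i \<ge> 0"
  shows "(\<Sum>i\<in>A. w i * a i)\<^sup>2 \<le> (\<Sum>i\<in>A. w i) * (\<Sum>i\<in>A. w i * (a i)\<^sup>2)"
proof -
  have "0 \<le> (\<Sum>i\<in>A. \<Sum>j\<in>A. w i * w j * (a i - a j)\<^sup>2)"
    using w by (intro sum_nonneg mult_nonneg_nonneg, auto)
  also have "\<dots> = (\<Sum>i\<in>A. \<Sum>j\<in>A. w i * (a i)\<^sup>2 * w j + w i * w j * (a j)\<^sup>2 - 2 * ((w i * a i) * (w j * a j)))"
    by (intro sum.cong refl, simp add: power2_eq_square algebra_simps)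
  also have "\<dots> = (\<Sum>i\<in>A. \<Sum>j\<in>A. w i * (a i)\<^sup>2 * w j) + (\<Sum>i\<in>A. \<Sum>j\<in>A. w i * w j * (a j)\<^sup>2)
      - 2 * (\<Sum>i\<in>A. \<Sum>j\<in>A. (w i * a i) * (w j * a j))"
    by (simp add: sum.distrib sum_subtractf sum_distrib_left)
  also have "(\<Sum>i\<in>A. \<Sum>j\<in>A. w i * (a i)\<^sup>2 * w j) = (\<Sum>i\<in>A. w i * (a i)\<^sup>2) * (\<Sum>i\<in>A. w i)"
    by (simp add: sum_product)
  also have "(\<Sum>i\<in>A. \<Sum>j\<in>A. w i * w j * (a j)\<^sup>2) = (\<Sum>i\<in>A. w i) * (\<Sum>i\<in>A. w i * (a i)\<^sup>2)"
    by (simp add: sum_product mult.assoc)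
  also have "(\<Sum>i\<in>A. \<Sum>j\<in>A. (w i * a i) * (w j * a j)) = (\<Sum>i\<in>A. w i * a i)\<^sup>2"
    by (simp add: sum_product power2_eq_square)
  finally show ?thesis by simp
qed

lemma jensen_abs: fixes p Y :: "'i \<Rightarrow> real"
  assumes p: "\<And>i. i \<in> A \<Longrightarrow> p i \<ge> 0" and s: "(\<Sum>i\<in>A. p i) = 1"
  shows "(\<Sum>i\<in>A. p i * \<bar>Y i\<bar>) \<le> sqrt (\<Sum>i\<in>A. p i * (Y i)\<^sup>2)"
proof -
  have "(\<Sum>i\<in>A. p i * \<bar>Y i\<bar>)\<^sup>2 \<le> (\<Sum>i\<in>A. p i * (\<bar>Y i\<bar>)\<^sup>2)"
    using weighted_cs[of A p "\<lambda>i. \<bar>Y i\<bar>"] p s by simp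
  then have "(\<Sum>i\<in>A. p i * \<bar>Y i\<bar>)\<^sup>2 \<le> (\<Sum>i\<in>A. p i * (Y i)\<^sup>2)" by simp
  moreover have "0 \<le> (\<Sum>i\<in>A. p i * \<bar>Y i\<bar>)" using p by (intro sum_nonneg, auto)
  ultimately show ?thesis using real_le_rsqrt by blast
qed

lemma cmod_diff_sq: "(cmod (a - b))\<^sup>2 = (cmod a)\<^sup>2 + (cmod b)\<^sup>2 - 2 * Re (cnj a * b)"
  unfolding cmod_power2 by (simp add: power2_eq_square algebra_simps)

lemma cmod_add_sq: "(cmod (a + b))\<^sup>2 = (cmod a)\<^sup>2 + (cmod b)\<^sup>2 + 2 * Re (cnj a * b)"
  unfolding cmod_power2 by (simp add: power2_eq_square algebra_simps)

definition qf :: "nat \<Rightarrow> complex mat \<Rightarrow> complex vec \<Rightarrow> complex" where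
  "qf N S u = (\<Sum>r<N. \<Sum>s<N. u $ r * cnj (u $ s) * S $$ (s, r))"

lemma quad_bound: assumes h: "herm N S" and SS: "S * S = 1\<^sub>m N" and u: "u \<in> carrier_vec N"
  shows "\<bar>Re (qf N S u)\<bar> \<le> (\<Sum>r<N. (cmod (u $ r))\<^sup>2)"
proof -
  have S: "S \<in> carrier_mat N N" using herm_carrier[OF h] .
  define v where "v = S *\<^sub>v u"
  have v: "v \<in> carrier_vec N" unfolding v_def using S u by auto
  have q: "qf N S u = (\<Sum>s<N. cnj (u $ s) * v $ s)"
    unfolding qf_def v_def using S u
    by (subst sum.swap, simp add: mult_mat_vec_sum row_scalar sum_distrib_left mult_ac)
  have "(\<Sum>i<N. cnj (v $ i) * v $ i) = (\<Sum>i<N. cnj (u $ i) * (S *\<^sub>v v) $ i)"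
    unfolding v_def by (rule herm_inner[OF h u], simp add: v[unfolded v_def])
  also have "S *\<^sub>v v = u" unfolding v_def using S u SS by (simp add: assoc_mult_mat_vec[symmetric])
  finally have "complex_of_real (\<Sum>i<N. (cmod (v $ i))\<^sup>2) = complex_of_real (\<Sum>i<N. (cmod (u $ i))\<^sup>2)"
    unfolding sum_cnj_self .
  then have vv: "(\<Sum>i<N. (cmod (v $ i))\<^sup>2) = (\<Sum>i<N. (cmod (u $ i))\<^sup>2)" by (simp only: of_real_eq_iff)
  have Req: "Re (qf N S u) = (\<Sum>s<N. Re (cnj (u $ s) * v $ s))" unfolding q by (simp add: Re_sum)
  have "0 \<le> (\<Sum>i<N. (cmod (u $ i - v $ i))\<^sup>2)" by (intro sum_nonneg, auto)
  also have "\<dots> = (\<Sum>i<N. (cmod (u $ i))\<^sup>2) + (\<Sum>i<N. (cmod (v $ i))\<^sup>2) - 2 * Re (qf N S u)"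
    unfolding Req cmod_diff_sq by (simp add: sum.distrib sum_subtractf sum_distrib_left)
  finally have 1: "Re (qf N S u) \<le> (\<Sum>i<N. (cmod (u $ i))\<^sup>2)" using vv by simp
  have "0 \<le> (\<Sum>i<N. (cmod (u $ i + v $ i))\<^sup>2)" by (intro sum_nonneg, auto)
  also have "\<dots> = (\<Sum>i<N. (cmod (u $ i))\<^sup>2) + (\<Sum>i<N. (cmod (v $ i))\<^sup>2) + 2 * Re (qf N S u)"
    unfolding Req cmod_add_sq by (simp add: sum.distrib sum_distrib_left)
  finally have 2: "- Re (qf N S u) \<le> (\<Sum>i<N. (cmod (u $ i))\<^sup>2)" using vv by simp
  show ?thesis using 1 2 by linarith
qed


lemma vnorm_sq: "v \<in> carrier_vec N \<Longrightarrow> (vnorm v)\<^sup>2 = (\<Sum>r<N. (cmod (v $ r))\<^sup>2)"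
  unfolding vnorm_def by (simp add: sum_nonneg)

lemma qf_one: assumes "u \<in> carrier_vec N"
  shows "qf N (1\<^sub>m N) u = complex_of_real (\<Sum>r<N. (cmod (u $ r))\<^sup>2)"
proof -
  have "qf N (1\<^sub>m N) u = (\<Sum>r<N. \<Sum>s<N. if s = r then u $ r * cnj (u $ r) else 0)"
    unfolding qf_def by (intro sum.cong refl, auto)
  also have "\<dots> = (\<Sum>r<N. u $ r * cnj (u $ r))" by simp
  also have "\<dots> = (\<Sum>r<N. complex_of_real ((cmod (u $ r))\<^sup>2))"
    by (intro sum.cong refl, rule complex_norm_square[symmetric])
  finally show ?thesis by (simp only: of_real_sum)
qed

lemma qf_scale: assumes "\<And>r. r < N \<Longrightarrow> x $ r = complex_of_real t * y $ r"
  shows "qf N S x = complex_of_real (t\<^sup>2) * qf N S y"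
  unfolding qf_def using assms by (simp add: sum_distrib_left power2_eq_square mult_ac)

lemma moment_qf: assumes k: "k \<ge> 1" and Lpos: "l1_norm c m > 0"
  shows "(\<Sum>js\<in>samples m k. complex_of_real (sample_prob c m js) * qf (qdim n) S (Omega n c \<phi> m js))
   = complex_of_real (1 - 1 / real k) * qf (qdim n) S (vec (qdim n) (\<lambda>i. \<Sum>j<m. c j * \<phi> j $ i))
     + complex_of_real (l1_norm c m / real k) * (\<Sum>j<m. complex_of_real (cmod (c j)) * qf (qdim n) S (\<phi> j))"
proof -
  define N where "N = qdim n"
  define \<Omega> where "\<Omega> = Omega n c \<phi> m"
  define p where "p js = complex_of_real (sample_prob c m js)" for js
  define a where "a = complex_of_real (1 - 1 / real k)"
  define b where "b = complex_of_real (l1_norm c m / real k)"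
  define \<psi> where "\<psi> = vec N (\<lambda>i. \<Sum>j<m. c j * \<phi> j $ i)"
  have "(\<Sum>js\<in>samples m k. p js * qf N S (\<Omega> js))
      = (\<Sum>r<N. \<Sum>s<N. (\<Sum>js\<in>samples m k. p js * (\<Omega> js $ r * cnj (\<Omega> js $ s))) * S $$ (s, r))"
    unfolding qf_def by (simp add: sum_distrib_left sum_distrib_right mult_ac sum.swap[of _ "samples m k"])
  also have "\<dots> = (\<Sum>r<N. \<Sum>s<N. (a * (\<psi> $ r * cnj (\<psi> $ s)) +
      b * (\<Sum>j<m. complex_of_real (cmod (c j)) * (\<phi> j $ r * cnj (\<phi> j $ s)))) * S $$ (s, r))"
  proof (intro sum.cong refl)
    fix r s assume r: "r \<in> {..<N}" and s: "s \<in> {..<N}"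
    show "(\<Sum>js\<in>samples m k. p js * (\<Omega> js $ r * cnj (\<Omega> js $ s))) * S $$ (s, r) =
      (a * (\<psi> $ r * cnj (\<psi> $ s)) + b * (\<Sum>j<m. complex_of_real (cmod (c j)) * (\<phi> j $ r * cnj (\<phi> j $ s)))) * S $$ (s, r)"
      using moment2[OF k Lpos, of r n s \<phi>] r s unfolding p_def \<Omega>_def a_def b_def \<psi>_def N_def by simp
  qed
  also have "\<dots> = a * qf N S \<psi> + b * (\<Sum>j<m. complex_of_real (cmod (c j)) * qf N S (\<phi> j))"
    unfolding qf_def by (simp add: algebra_simps sum.distrib sum_distrib_left sum_distrib_right sum.swap[of _ "{..<m}"])
  finally show ?thesis unfolding p_def \<Omega>_def a_def b_def \<psi>_def N_def .
qed

lemma bound_term: fixes X q :: real assumes "\<bar>q\<bar> \<le> X"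
  shows "(1 / X - 1) * q \<le> \<bar>1 - X\<bar>"
proof (cases "X = 0")
  case True then show ?thesis using assms by simp
next
  case False
  then have X: "X > 0" using assms by linarith
  have "(1 / X - 1) * q \<le> \<bar>1 / X - 1\<bar> * \<bar>q\<bar>" by (metis abs_ge_self abs_mult)
  also have "\<dots> \<le> \<bar>1 / X - 1\<bar> * X" using assms by (intro mult_left_mono, auto)
  also have "\<dots> = \<bar>1 - X\<bar>" using X by (simp add: abs_mult[symmetric] field_simps)
  finally show ?thesis .
qed




lemma stab_facts: "stabilizer_state n v \<Longrightarrow> v \<in> carrier_vec (qdim n) \<and> (\<Sum>r<qdim n. (cmod (v $ r))\<^sup>2) = 1"
  unfolding stabilizer_state_def using vnorm_sq[of v "qdim n"] by auto

lemma L_ge_1: assumes stab: "\<forall>j<m. stabilizer_state n (\<phi> j)"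
    and psi_def: "\<psi> = vec (qdim n) (\<lambda>i. \<Sum>j<m. c j * \<phi> j $ i)"
    and psi_norm: "vnorm \<psi> = 1"
  shows "l1_norm c m \<ge> 1"
proof -
  define N where "N = qdim n"
  define L where "L = l1_norm c m"
  have psi: "\<psi> \<in> carrier_vec N" unfolding psi_def N_def by simp
  have L0: "L \<ge> 0" unfolding L_def l1_norm_def by (simp add: sum_nonneg)
  have phi1: "(\<Sum>r<N. (cmod (\<phi> j $ r))\<^sup>2) = 1" if "j < m" for j
    using stab_facts[of n "\<phi> j"] stab that unfolding N_def by auto
  have "1 = (vnorm \<psi>)\<^sup>2" using psi_norm by simp
  also have "\<dots> = (\<Sum>r<N. (cmod (\<psi> $ r))\<^sup>2)" by (rule vnorm_sq[OF psi])
  also have "\<dots> \<le> (\<Sum>r<N. L * (\<Sum>j<m. cmod (c j) * (cmod (\<phi> j $ r))\<^sup>2))"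
  proof (intro sum_mono)
    fix r assume r: "r \<in> {..<N}"
    have "cmod (\<psi> $ r) = cmod (\<Sum>j<m. c j * \<phi> j $ r)" unfolding psi_def N_def using r N_def by simp
    also have "\<dots> \<le> (\<Sum>j<m. cmod (c j) * cmod (\<phi> j $ r))"
      by (rule order_trans[OF norm_sum], simp add: norm_mult)
    finally have "(cmod (\<psi> $ r))\<^sup>2 \<le> (\<Sum>j<m. cmod (c j) * cmod (\<phi> j $ r))\<^sup>2"
      by (intro power_mono, auto)
    also have "\<dots> \<le> (\<Sum>j<m. cmod (c j)) * (\<Sum>j<m. cmod (c j) * (cmod (\<phi> j $ r))\<^sup>2)"
      by (rule weighted_cs, simp)
    finally show "(cmod (\<psi> $ r))\<^sup>2 \<le> L * (\<Sum>j<m. cmod (c j) * (cmod (\<phi> j $ r))\<^sup>2)"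
      unfolding L_def l1_norm_def .
  qed
  also have "\<dots> = L * (\<Sum>j<m. cmod (c j) * (\<Sum>r<N. (cmod (\<phi> j $ r))\<^sup>2))"
    by (simp add: sum_distrib_left sum.swap[of _ "{..<N}"])
  also have "\<dots> = L * L" using phi1 unfolding L_def l1_norm_def by simp
  finally have LL: "1 \<le> L * L" .
  show ?thesis unfolding L_def[symmetric]
  proof (rule ccontr)
    assume "\<not> 1 \<le> L"
    then have "L < 1" by simp
    then have "L * L < 1 * 1" using L0 by (intro mult_strict_mono, auto)
    then show False using LL by simp
  qed
qed


lemma rank_le: assumes stab: "\<forall>j<m. stabilizer_state n (\<phi> j)" and js: "js \<in> samples m k"
  shows "stabilizer_rank n (sampled_state n c \<phi> m js) \<le> k"
proof -
  define V where "V = vnorm (Omega n c \<phi> m js)"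
  define a where "a \<alpha> = complex_of_real (1 / V) * complex_of_real (l1_norm c m / real k) *
     (c (js ! \<alpha>) / complex_of_real (cmod (c (js ! \<alpha>))))" for \<alpha>
  have jsl: "length js = k" "set js \<subseteq> {..<m}" using js unfolding samples_def by auto
  have jsm: "js ! \<alpha> < m" if "\<alpha> < k" for \<alpha>
  proof -
    have "js ! \<alpha> \<in> set js" using that jsl(1) by (intro nth_mem, simp)
    then show ?thesis using jsl(2) by blast
  qed
  have "\<exists>(a :: nat \<Rightarrow> complex) (\<phi>' :: nat \<Rightarrow> complex vec).
      (\<forall>j<k. stabilizer_state n (\<phi>' j)) \<and>
      sampled_state n c \<phi> m js = vec (qdim n) (\<lambda>i. \<Sum>j<k. a j * \<phi>' j $ i)"
  proof (intro exI conjI)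
    show "\<forall>j<k. stabilizer_state n (\<phi> (js ! j))" using stab jsm by auto
    show "sampled_state n c \<phi> m js = vec (qdim n) (\<lambda>i. \<Sum>j<k. a j * \<phi> (js ! j) $ i)"
    proof (rule eq_vecI)
      fix i assume "i < dim_vec (vec (qdim n) (\<lambda>i. \<Sum>j<k. a j * \<phi> (js ! j) $ i))"
      then have i: "i < qdim n" by simp
      show "sampled_state n c \<phi> m js $ i = vec (qdim n) (\<lambda>i. \<Sum>j<k. a j * \<phi> (js ! j) $ i) $ i"
        unfolding sampled_state_def V_def[symmetric] using i jsl(1)
        by (simp add: omega_index[OF js i] a_def sum_distrib_left mult_ac Omega_def)
    qed (simp add: sampled_state_def Omega_def)
  qed
  then show ?thesis unfolding stabilizer_rank_def by (rule Least_le)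
qed


lemma trace_part:
  fixes n m k :: nat and c :: "nat \<Rightarrow> complex" and \<phi> :: "nat \<Rightarrow> complex vec"
    and \<psi> :: "complex vec"
  assumes stab: "\<forall>j<m. stabilizer_state n (\<phi> j)"
    and psi_def: "\<psi> = vec (qdim n) (\<lambda>i. \<Sum>j<m. c j * \<phi> j $ i)"
    and psi_norm: "vnorm \<psi> = 1"
    and k: "k \<ge> 1"
  shows "trace_norm (rho1 n c \<phi> m k - outer \<psi> \<psi>)
           \<le> 2 * (l1_norm c m)\<^sup>2 / real k + sqrt (var_norm2 n c \<phi> m k)"
proof -
  define N where "N = qdim n"
  define L where "L = l1_norm c m"
  define p where "p = sample_prob c m"
  define \<Omega> where "\<Omega> = Omega n c \<phi> m"
  define sst where "sst = sampled_state n c \<phi> m"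
  define X where "X js = (vnorm (\<Omega> js))\<^sup>2" for js
  define EO where "EO = (\<Sum>js\<in>samples m k. p js * X js)"
  define D where "D = rho1 n c \<phi> m k - outer \<psi> \<psi>"
  define SM where "SM = samples m k"
  have Lge1: "L \<ge> 1" unfolding L_def by (rule L_ge_1[OF stab psi_def psi_norm])
  then have Lpos: "l1_norm c m > 0" unfolding L_def by simp
  have k0: "real k > 0" using k by simp
  have s1: "(\<Sum>j<m. cmod (c j) / l1_norm c m) = 1"
    using Lpos unfolding l1_norm_def by (simp add: sum_divide_distrib[symmetric])
  have sp1: "(\<Sum>js\<in>SM. p js) = 1" unfolding SM_def p_def by (rule expect0[OF s1])
  have pnn: "p js \<ge> 0" for js unfolding p_def by (rule sample_prob_nonneg)
  have psi: "\<psi> \<in> carrier_vec N" unfolding psi_def N_def by simp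
  have psi1: "(\<Sum>r<N. (cmod (\<psi> $ r))\<^sup>2) = 1" using vnorm_sq[OF psi] psi_norm by simp
  have phic: "\<phi> j \<in> carrier_vec N" "(\<Sum>r<N. (cmod (\<phi> j $ r))\<^sup>2) = 1" if "j < m" for j
    using stab_facts[of n "\<phi> j"] stab that unfolding N_def by auto
  have Oc: "\<Omega> js \<in> carrier_vec N" for js unfolding \<Omega>_def Omega_def N_def by simp
  have Xsum: "X js = (\<Sum>r<N. (cmod (\<Omega> js $ r))\<^sup>2)" for js unfolding X_def by (rule vnorm_sq[OF Oc])
  have Xnn: "X js \<ge> 0" for js unfolding X_def by simp
  have sstc: "sst js \<in> carrier_vec N" for js unfolding sst_def sampled_state_def \<Omega>_def[symmetric]
    using Oc[of js] by (simp only: smult_carrier_vec)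
  have D: "D \<in> carrier_mat N N" unfolding D_def outer_def
    by (rule minus_carrier_mat, use psi in simp)
  have Dij: "D $$ (r,s) = (\<Sum>js\<in>SM. complex_of_real (p js) * (sst js $ r * cnj (sst js $ s)))
     - \<psi> $ r * cnj (\<psi> $ s)" if "r < N" "s < N" for r s
    using that psi unfolding D_def rho1_def outer_def SM_def p_def sst_def N_def by simp
  have hD: "herm N D"
  proof -
    have "D $$ (s,r) = cnj (D $$ (r,s))" if "r < N" "s < N" for r s
      using that by (simp add: Dij cnj_sum mult_ac)
    then show ?thesis unfolding herm_def using D by blast
  qed
  obtain S where hS: "herm N S" and SS: "S * S = 1\<^sub>m N" and trS: "complex_of_real (trace_norm D) = tr (D * S)"
    using key_sign[OF hD] by blast
  have S: "S \<in> carrier_mat N N" using herm_carrier[OF hS] .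
  have trexp: "tr (D * S) = (\<Sum>js\<in>SM. complex_of_real (p js) * qf N S (sst js)) - qf N S \<psi>"
  proof -
    have "tr (D * S) = (\<Sum>r<N. \<Sum>s<N. D $$ (r,s) * S $$ (s,r))"
      unfolding tr_def using D S by (simp add: row_scalar[of _ N N] col_def)
    also have "\<dots> = (\<Sum>r<N. \<Sum>s<N. (\<Sum>js\<in>SM. complex_of_real (p js) * (sst js $ r * cnj (sst js $ s)) * S $$ (s,r))
        - \<psi> $ r * cnj (\<psi> $ s) * S $$ (s,r))"
      by (intro sum.cong refl, simp add: Dij left_diff_distrib sum_distrib_right)
    also have "\<dots> = (\<Sum>js\<in>SM. complex_of_real (p js) * qf N S (sst js)) - qf N S \<psi>"
      unfolding qf_def by (simp add: sum_subtractf sum_distrib_left sum.swap[of _ SM] mult_ac)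
    finally show ?thesis .
  qed
  have qsst: "qf N S (sst js) = complex_of_real (1 / X js) * qf N S (\<Omega> js)" for js
  proof -
    have "qf N S (sst js) = complex_of_real ((1 / vnorm (\<Omega> js))\<^sup>2) * qf N S (\<Omega> js)"
    proof (rule qf_scale)
      fix r assume "r < N"
      then show "sst js $ r = complex_of_real (1 / vnorm (\<Omega> js)) * \<Omega> js $ r"
        unfolding sst_def sampled_state_def \<Omega>_def[symmetric] using Oc[of js] by simp
    qed
    then show ?thesis unfolding X_def by (simp add: power_one_over)
  qed
  have mom: "(\<Sum>js\<in>SM. complex_of_real (p js) * qf N T' (\<Omega> js))
     = complex_of_real (1 - 1 / real k) * qf N T' \<psi>
     + complex_of_real (L / real k) * (\<Sum>j<m. complex_of_real (cmod (c j)) * qf N T' (\<phi> j))" for T'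
    using moment_qf[OF k Lpos, of n T' \<phi>] unfolding SM_def p_def \<Omega>_def N_def L_def psi_def .
  have "complex_of_real EO = (\<Sum>js\<in>SM. complex_of_real (p js) * qf N (1\<^sub>m N) (\<Omega> js))"
    unfolding EO_def SM_def qf_one[OF Oc] Xsum by simp
  also have "\<dots> = complex_of_real (1 - 1 / real k) * qf N (1\<^sub>m N) \<psi>
     + complex_of_real (L / real k) * (\<Sum>j<m. complex_of_real (cmod (c j)) * qf N (1\<^sub>m N) (\<phi> j))"
    by (rule mom)
  also have "\<dots> = complex_of_real (1 - 1 / real k) + complex_of_real (L / real k) * (\<Sum>j<m. complex_of_real (cmod (c j)))"
  proof -
    have "(\<Sum>j<m. complex_of_real (cmod (c j)) * qf N (1\<^sub>m N) (\<phi> j)) = (\<Sum>j<m. complex_of_real (cmod (c j)))"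
    proof (intro sum.cong refl)
      fix j assume "j \<in> {..<m}"
      then have j: "j < m" by simp
      show "complex_of_real (cmod (c j)) * qf N (1\<^sub>m N) (\<phi> j) = complex_of_real (cmod (c j))"
        unfolding qf_one[OF phic(1)[OF j]] phic(2)[OF j] by simp
    qed
    then show ?thesis unfolding qf_one[OF psi] psi1 by simp
  qed
  also have "\<dots> = complex_of_real (1 - 1 / real k + L / real k * L)"
    unfolding L_def l1_norm_def by simp
  finally have EOv: "EO = 1 - 1 / real k + L / real k * L" by (simp only: of_real_eq_iff)
  have EO1: "EO - 1 = (L * L - 1) / real k" unfolding EOv using k0 by (simp add: field_simps)
  have LL1: "L * L \<ge> 1 * 1" by (rule mult_mono, use Lge1 in auto)
  have "(L * L - 1) / real k \<ge> 0" using LL1 k0 by simp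
  then have EOge: "EO \<ge> 1" using EO1 by linarith
  define q where "q js = Re (qf N S (\<Omega> js))" for js
  define qp where "qp = Re (qf N S \<psi>)"
  define qj where "qj j = Re (qf N S (\<phi> j))" for j
  have bO: "\<bar>q js\<bar> \<le> X js" for js unfolding q_def Xsum by (rule quad_bound[OF hS SS Oc])
  have bpsi: "\<bar>qp\<bar> \<le> 1" unfolding qp_def using quad_bound[OF hS SS psi] psi1 by simp
  have bphi: "\<bar>qj j\<bar> \<le> 1" if "j < m" for j unfolding qj_def using quad_bound[OF hS SS phic(1)[OF that]] phic(2)[OF that] by simp
  define T where "T = trace_norm D"
  have "T = Re (tr (D * S))" using arg_cong[OF trS, of Re] unfolding T_def by simp
  also have "\<dots> = (\<Sum>js\<in>SM. p js * (1 / X js * q js)) - qp"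
    unfolding trexp qsst q_def qp_def by (simp add: Re_sum)
  finally have T1: "T = (\<Sum>js\<in>SM. p js * (1 / X js * q js)) - qp" .
  have momR: "(\<Sum>js\<in>SM. p js * q js) = (1 - 1 / real k) * qp + L / real k * (\<Sum>j<m. cmod (c j) * qj j)"
    using arg_cong[OF mom[of S], of Re] unfolding q_def qp_def qj_def by (simp add: Re_sum)
  have "T = (\<Sum>js\<in>SM. p js * ((1 / X js - 1) * q js)) + (\<Sum>js\<in>SM. p js * q js) - qp"
    unfolding T1 by (simp add: algebra_simps sum_subtractf)
  also have "\<dots> = (\<Sum>js\<in>SM. p js * ((1 / X js - 1) * q js)) + L / real k * (\<Sum>j<m. cmod (c j) * qj j) - qp / real k"
    unfolding momR by (simp add: algebra_simps)
  finally have T2: "T = (\<Sum>js\<in>SM. p js * ((1 / X js - 1) * q js)) + L / real k * (\<Sum>j<m. cmod (c j) * qj j) - qp / real k" .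
  have I1: "(\<Sum>js\<in>SM. p js * ((1 / X js - 1) * q js)) \<le> (\<Sum>js\<in>SM. p js * \<bar>1 - X js\<bar>)"
    by (intro sum_mono mult_left_mono bound_term bO pnn)
  have I2: "(\<Sum>j<m. cmod (c j) * qj j) \<le> L"
  proof -
    have "(\<Sum>j<m. cmod (c j) * qj j) \<le> (\<Sum>j<m. cmod (c j) * 1)"
    proof (intro sum_mono mult_left_mono)
      fix j assume "j \<in> {..<m}"
      then show "qj j \<le> 1" using bphi[of j] by simp
    qed simp
    then show ?thesis unfolding L_def l1_norm_def by simp
  qed
  have "- qp \<le> 1" using bpsi by linarith
  then have I3: "- qp / real k \<le> 1 / real k" using k0 by (intro divide_right_mono, auto)
  have I4: "(\<Sum>js\<in>SM. p js * \<bar>1 - X js\<bar>) \<le> (\<Sum>js\<in>SM. p js * \<bar>X js - EO\<bar>) + (EO - 1)"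
  proof -
    have "(\<Sum>js\<in>SM. p js * \<bar>1 - X js\<bar>) \<le> (\<Sum>js\<in>SM. p js * \<bar>X js - EO\<bar> + p js * (EO - 1))"
      using EOge pnn by (intro sum_mono, simp add: distrib_left[symmetric] mult_left_mono)
    also have "\<dots> = (\<Sum>js\<in>SM. p js * \<bar>X js - EO\<bar>) + (EO - 1)"
      by (simp add: sum.distrib sum_distrib_right[symmetric] sp1)
    finally show ?thesis .
  qed
  have I5: "(\<Sum>js\<in>SM. p js * \<bar>X js - EO\<bar>) \<le> sqrt (\<Sum>js\<in>SM. p js * (X js - EO)\<^sup>2)"
    by (rule jensen_abs[OF pnn sp1])
  have var: "var_norm2 n c \<phi> m k = (\<Sum>js\<in>SM. p js * (X js - EO)\<^sup>2)"
    unfolding var_norm2_def expect_def EO_def X_def SM_def p_def \<Omega>_def ..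
  have LI: "L / real k * (\<Sum>j<m. cmod (c j) * qj j) \<le> L / real k * L"
    using I2 Lge1 k0 by (intro mult_left_mono, auto)
  have Tle: "T \<le> sqrt (var_norm2 n c \<phi> m k) + ((L * L - 1) / real k + L / real k * L + 1 / real k)"
    using T2 I1 I3 I4 I5 LI unfolding var EO1 by linarith
  have eq: "(L * L - 1) / real k + L / real k * L + 1 / real k = 2 * L\<^sup>2 / real k"
    using k0 by (simp add: field_simps power2_eq_square)
  from Tle eq have "T \<le> sqrt (var_norm2 n c \<phi> m k) + 2 * L\<^sup>2 / real k" by simp
  then show ?thesis unfolding T_def D_def L_def by (simp add: add.commute)
qed



theorem lemma6:
  fixes n m k :: nat and c :: "nat \<Rightarrow> complex" and \<phi> :: "nat \<Rightarrow> complex vec"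
    and \<psi> :: "complex vec"
  assumes stab: "\<forall>j<m. stabilizer_state n (\<phi> j)"
    and psi_def: "\<psi> = vec (qdim n) (\<lambda>i. \<Sum>j<m. c j * \<phi> j $ i)"
    and psi_norm: "vnorm \<psi> = 1"
    and k: "k \<ge> 1"
  shows "(\<forall>js\<in>samples m k. sample_prob c m js > 0 \<longrightarrow>
            stabilizer_rank n (sampled_state n c \<phi> m js) \<le> k)
       \<and> trace_norm (rho1 n c \<phi> m k - outer \<psi> \<psi>)
           \<le> 2 * (l1_norm c m)\<^sup>2 / real k + sqrt (var_norm2 n c \<phi> m k)"
  using rank_le[OF stab] trace_part[OF stab psi_def psi_norm k] by blast

end
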